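(* Consider the discrete-time fractional-order system $\Delta^{\alpha}x[k+1]=Ax[k]+Bu[k]$, $y[k]=Cx[k]$, with state $x[k]\in\mathbb{R}^n$, unknown input $u[k]\in\mathbb{R}^p$ ($p<n$), and matrices $A\in\mathbb{R}^{n\times n}$, $B\in\mathbb{R}^{n\times p}$, $C$ with $n$ columns, where $\Delta^{\alpha_i}x_i[k]=\sum_{j=0}^{k}\psi(\alpha_i,j)x_i[k-j]$. Let $K\ge 1$ and define $\Theta$ and $\Xi$ as in the context. Then the system is perfectly observable after $K$ measurements if and only if $\operatorname{rank}([\Theta\ \ \Xi])=n+(K-1)p$.
   Context: $\psi(\alpha_i,j)=\frac{\Gamma(j-\alpha_i)}{\Gamma(-\alpha_i)\Gamma(j+1)}$, $D(\alpha,j)=\operatorname{diag}(\psi(\alpha_1,j),\dots,\psi(\alpha_n,j))$, $A_0=A-D(\alpha,1)$, $A_j=-D(\alpha,j+1)$ for $j\ge1$, $G_0=I_n$, $G_k=\sum_{j=0}^{k-1}A_jG_{k-1-j}$ for $k\ge1$; the state satisfies $x[k]=G_kx[0]+\sum_{j=0}^{k-1}G_{k-1-j}Bu[j]$. Define $\Theta=[(CG_0)^T,(CG_1)^T,\dots,(CG_{K-1})^T]^T$ and $\Xi$ the $K\times K$ block lower-triangular matrix whose $(r,s)$ block ($r,s=1,\dots,K$) is $CG_{r-s-1}B$ if $r>s$ and $0$ otherwise (so the first block row and last block column are zero), so that $Y=\Theta x[0]+\Xi U$ with $Y=[y[0]^T,\dots,y[K-1]^T]^T$, $U=[u[0]^T,\dots,u[K-1]^T]^T$.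 The system is perfectly observable (after $K$ measurements) if, given $(\alpha,A,B,C)$ and the observations $y[0],\dots,y[K-1]$, it is possible to (uniquely) recover the initial state $x[0]$ and the unknown inputs $u[0],\dots,u[K-2]$. *)

theory Defs
  imports Complex_Main "Jordan_Normal_Form.DL_Rank"
begin

text \<open>Coefficient psi(a,j) = Gamma(j-a)/(Gamma(-a) Gamma(j+1)), written via the
  Gamma-ratio identity Gamma(j-a)/Gamma(-a) = pochhammer (-a) j (well defined for all a).\<close>
definition psi :: "real \<Rightarrow> nat \<Rightarrow> real" where
  "psi a j = pochhammer (-a) j / fact j"

definition Dmat :: "real vec \<Rightarrow> nat \<Rightarrow> real mat" where
  "Dmat \<alpha> j = mat (dim_vec \<alpha>) (dim_vec \<alpha>) (\<lambda>(i,k). if i = k then psi (\<alpha> $ i) j else 0)"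

definition Acoef :: "real vec \<Rightarrow> real mat \<Rightarrow> nat \<Rightarrow> real mat" where
  "Acoef \<alpha> A j = (if j = 0 then A - Dmat \<alpha> 1 else - Dmat \<alpha> (j + 1))"

fun Glist :: "real vec \<Rightarrow> real mat \<Rightarrow> nat \<Rightarrow> real mat list" where
  "Glist \<alpha> A 0 = [1\<^sub>m (dim_row A)]"
| "Glist \<alpha> A (Suc k) =
     (let gs = Glist \<alpha> A k
      in gs @ [foldr (\<lambda>j acc. Acoef \<alpha> A j * gs ! (k - j) + acc) [0..<Suc k]
                     (0\<^sub>m (dim_row A) (dim_row A))])"

definition Gmat :: "real vec \<Rightarrow> real mat \<Rightarrow> nat \<Rightarrow> real mat" where
  "Gmat \<alpha> A k = Glist \<alpha> A k ! k"

definition Theta :: "real vec \<Rightarrow> real mat \<Rightarrow> real mat \<Rightarrow> nat \<Rightarrow> real mat" where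
  "Theta \<alpha> A C K = mat (K * dim_row C) (dim_col C)
     (\<lambda>(i,j). (C * Gmat \<alpha> A (i div dim_row C)) $$ (i mod dim_row C, j))"

text \<open>Xi: K x K block lower triangular, block (r,s) (0-based) = C G_{r-s-1} B if r > s, else 0.\<close>
definition Xi :: "real vec \<Rightarrow> real mat \<Rightarrow> real mat \<Rightarrow> real mat \<Rightarrow> nat \<Rightarrow> real mat" where
  "Xi \<alpha> A B C K = mat (K * dim_row C) (K * dim_col B)
     (\<lambda>(i,j). let r = i div dim_row C; s = j div dim_col B in
        if s < r then (C * Gmat \<alpha> A (r - s - 1) * B) $$ (i mod dim_row C, j mod dim_col B)
        else 0)"

definition ThetaXi :: "real vec \<Rightarrow> real mat \<Rightarrow> real mat \<Rightarrow> real mat \<Rightarrow> nat \<Rightarrow> real mat" where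
  "ThetaXi \<alpha> A B C K = (let T = Theta \<alpha> A C K; X = Xi \<alpha> A B C K in
     mat (dim_row T) (dim_col T + dim_col X)
       (\<lambda>(i,j). if j < dim_col T then T $$ (i,j) else X $$ (i, j - dim_col T)))"

definition frac_diff :: "real vec \<Rightarrow> (nat \<Rightarrow> real vec) \<Rightarrow> nat \<Rightarrow> real vec" where
  "frac_diff \<alpha> x k = vec (dim_vec \<alpha>) (\<lambda>i. \<Sum>j\<le>k. psi (\<alpha> $ i) j * (x (k - j) $ i))"

definition is_solution :: "real vec \<Rightarrow> real mat \<Rightarrow> real mat \<Rightarrow> (nat \<Rightarrow> real vec) \<Rightarrow> (nat \<Rightarrow> real vec) \<Rightarrow> bool" where
  "is_solution \<alpha> A B x u \<longleftrightarrow>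
     (\<forall>k. x k \<in> carrier_vec (dim_row A) \<and> u k \<in> carrier_vec (dim_col B)) \<and>
     (\<forall>k. frac_diff \<alpha> x (Suc k) = A *\<^sub>v x k + B *\<^sub>v u k)"

definition perfectly_observable :: "real vec \<Rightarrow> real mat \<Rightarrow> real mat \<Rightarrow> real mat \<Rightarrow> nat \<Rightarrow> bool" where
  "perfectly_observable \<alpha> A B C K \<longleftrightarrow>
     (\<forall>x u x' u'. is_solution \<alpha> A B x u \<and> is_solution \<alpha> A B x' u' \<and>
        (\<forall>k<K. C *\<^sub>v x k = C *\<^sub>v x' k) \<longrightarrow>
        x 0 = x' 0 \<and> (\<forall>j. j + 1 < K \<longrightarrow> u j = u' j))"

end

theory Submission
  imports Defs
begin


lemma Glist_len: "length (Glist \<alpha> A k) = Suc k"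
  by (induction k) (auto simp: Let_def)

lemma Glist_nth: "j \<le> k \<Longrightarrow> Glist \<alpha> A k ! j = Gmat \<alpha> A j"
proof (induction k)
  case 0 thus ?case by (simp add: Gmat_def)
next
  case (Suc k)
  show ?case
  proof (cases "j = Suc k")
    case True thus ?thesis by (simp add: Gmat_def)
  next
    case False
    hence "j \<le> k" using Suc.prems by simp
    thus ?thesis using Suc.IH Glist_len[of \<alpha> A k] by (simp add: Let_def nth_append)
  qed
qed

lemma Gmat_0: "Gmat \<alpha> A 0 = 1\<^sub>m (dim_row A)" by (simp add: Gmat_def)

lemma Gmat_Suc: "Gmat \<alpha> A (Suc k) = foldr (\<lambda>j acc. Acoef \<alpha> A j * Gmat \<alpha> A (k - j) + acc) [0..<Suc k]
   (0\<^sub>m (dim_row A) (dim_row A))"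
proof -
  have "Gmat \<alpha> A (Suc k) = foldr (\<lambda>j acc. Acoef \<alpha> A j * Glist \<alpha> A k ! (k - j) + acc) [0..<Suc k]
   (0\<^sub>m (dim_row A) (dim_row A))"
    using Glist_len[of \<alpha> A k] by (simp add: Gmat_def Let_def nth_append)
  also have "\<dots> = foldr (\<lambda>j acc. Acoef \<alpha> A j * Gmat \<alpha> A (k - j) + acc) [0..<Suc k]
   (0\<^sub>m (dim_row A) (dim_row A))"
    by (rule foldr_cong) (auto simp: Glist_nth)
  finally show ?thesis .
qed

lemma foldr_mat_sum:
  assumes "\<And>j. j \<in> set js \<Longrightarrow> F j \<in> carrier_mat n n"
  shows "foldr (\<lambda>j acc. F j + acc) js (0\<^sub>m n n) \<in> carrier_mat n n \<and>
    (\<forall>i l. i < n \<longrightarrow> l < n \<longrightarrow> foldr (\<lambda>j acc. F j + acc) js (0\<^sub>m n n) $$ (i,l)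
        = sum_list (map (\<lambda>j. F j $$ (i,l)) js))"
  using assms by (induction js) auto

lemma mult_entry:
  assumes "A \<in> carrier_mat nr k" "B \<in> carrier_mat k nc" "i < nr" "j < nc"
  shows "(A * B) $$ (i,j) = (\<Sum>h<k. A $$ (i,h) * B $$ (h,j))"
  using assms by (simp add: scalar_prod_def atLeast0LessThan)

lemma mult_vec_entry:
  assumes "A \<in> carrier_mat nr k" "v \<in> carrier_vec k" "i < nr"
  shows "(A *\<^sub>v v) $ i = (\<Sum>h<k. A $$ (i,h) * v $ h)"
  using assms by (simp add: scalar_prod_def atLeast0LessThan)

lemma Acoef_carrier:
  assumes "\<alpha> \<in> carrier_vec n" "A \<in> carrier_mat n n"
  shows "Acoef \<alpha> A j \<in> carrier_mat n n"
  using assms by (auto simp: Acoef_def Dmat_def)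

lemma Acoef_entry:
  assumes "\<alpha> \<in> carrier_vec n" "A \<in> carrier_mat n n" "i < n" "h < n"
  shows "Acoef \<alpha> A j $$ (i,h) = (if j = 0 then A $$ (i,h) else 0) - (if i = h then psi (\<alpha> $ i) (Suc j) else 0)"
  using assms by (auto simp: Acoef_def Dmat_def)

lemma Gmat_carrier:
  assumes "\<alpha> \<in> carrier_vec n" "A \<in> carrier_mat n n"
  shows "Gmat \<alpha> A k \<in> carrier_mat n n"
proof (induction k rule: less_induct)
  case (less k)
  show ?case
  proof (cases k)
    case 0 thus ?thesis using assms by (simp add: Gmat_0)
  next
    case (Suc q)
    have c: "\<And>j. j \<in> set [0..<Suc q] \<Longrightarrow> Acoef \<alpha> A j * Gmat \<alpha> A (q - j) \<in> carrier_mat n n"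
      using less Suc Acoef_carrier[OF assms] by (metis diff_le_self le_imp_less_Suc mult_carrier_mat)
    have d: "dim_row A = n" using assms by simp
    show ?thesis unfolding Suc Gmat_Suc d using foldr_mat_sum[where js="[0..<Suc q]" and F="\<lambda>j. Acoef \<alpha> A j * Gmat \<alpha> A (q-j)", OF c] by blast
  qed
qed

lemma g_rec:
  assumes "\<alpha> \<in> carrier_vec n" "A \<in> carrier_mat n n" "i < n" "l < n"
  shows "Gmat \<alpha> A (Suc k) $$ (i,l) = (\<Sum>j\<le>k. \<Sum>h<n. Acoef \<alpha> A j $$ (i,h) * Gmat \<alpha> A (k-j) $$ (h,l))"
proof -
  have c: "\<And>j. j \<in> set [0..<Suc k] \<Longrightarrow> Acoef \<alpha> A j * Gmat \<alpha> A (k - j) \<in> carrier_mat n n"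
    using Acoef_carrier[OF assms(1,2)] Gmat_carrier[OF assms(1,2)] by (blast intro: mult_carrier_mat)
  have "Gmat \<alpha> A (Suc k) $$ (i,l) = sum_list (map (\<lambda>j. (Acoef \<alpha> A j * Gmat \<alpha> A (k - j)) $$ (i,l)) [0..<Suc k])"
    using foldr_mat_sum[where js="[0..<Suc k]" and F="\<lambda>j. Acoef \<alpha> A j * Gmat \<alpha> A (k-j)", OF c] assms unfolding Gmat_Suc carrier_matD(1)[OF assms(2)] by blast
  also have "\<dots> = (\<Sum>j\<le>k. (Acoef \<alpha> A j * Gmat \<alpha> A (k - j)) $$ (i,l))"
    unfolding sum_set_upt_conv_sum_list_nat[symmetric] by (rule sum.cong) auto
  also have "\<dots> = (\<Sum>j\<le>k. \<Sum>h<n. Acoef \<alpha> A j $$ (i,h) * Gmat \<alpha> A (k-j) $$ (h,l))"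
    by (rule sum.cong[OF refl], rule mult_entry[OF Acoef_carrier[OF assms(1,2)] Gmat_carrier[OF assms(1,2)] assms(3,4)])
  finally show ?thesis .
qed

lemma g_0:
  assumes "A \<in> carrier_mat n n" "i < n" "l < n"
  shows "Gmat \<alpha> A 0 $$ (i,l) = (if i = l then 1 else 0)"
  using assms by (simp add: Gmat_0)

lemma gb_rec:
  assumes "\<alpha> \<in> carrier_vec n" "A \<in> carrier_mat n n" "B \<in> carrier_mat n p" "i < n" "t < p"
  shows "(Gmat \<alpha> A (Suc q) * B) $$ (i,t) = (\<Sum>j\<le>q. \<Sum>h<n. Acoef \<alpha> A j $$ (i,h) * (Gmat \<alpha> A (q-j) * B) $$ (h,t))"
proof -
  note G = Gmat_carrier[OF assms(1,2)]
  have "(Gmat \<alpha> A (Suc q) * B) $$ (i,t) = (\<Sum>l<n. Gmat \<alpha> A (Suc q) $$ (i,l) * B $$ (l,t))"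
    using mult_entry[OF G assms(3) assms(4,5)] .
  also have "\<dots> = (\<Sum>l<n. (\<Sum>j\<le>q. \<Sum>h<n. Acoef \<alpha> A j $$ (i,h) * Gmat \<alpha> A (q-j) $$ (h,l)) * B $$ (l,t))"
    using g_rec[OF assms(1,2,4)] by simp
  also have "\<dots> = (\<Sum>l<n. \<Sum>j\<le>q. \<Sum>h<n. Acoef \<alpha> A j $$ (i,h) * Gmat \<alpha> A (q-j) $$ (h,l) * B $$ (l,t))"
    by (simp add: sum_distrib_right)
  also have "\<dots> = (\<Sum>j\<le>q. \<Sum>l<n. \<Sum>h<n. Acoef \<alpha> A j $$ (i,h) * Gmat \<alpha> A (q-j) $$ (h,l) * B $$ (l,t))"
    by (rule sum.swap)
  also have "\<dots> = (\<Sum>j\<le>q. \<Sum>h<n. \<Sum>l<n. Acoef \<alpha> A j $$ (i,h) * Gmat \<alpha> A (q-j) $$ (h,l) * B $$ (l,t))"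
    by (rule sum.cong[OF refl], rule sum.swap)
  also have "\<dots> = (\<Sum>j\<le>q. \<Sum>h<n. Acoef \<alpha> A j $$ (i,h) * (\<Sum>l<n. Gmat \<alpha> A (q-j) $$ (h,l) * B $$ (l,t)))"
    by (simp add: sum_distrib_left mult.assoc)
  also have "\<dots> = (\<Sum>j\<le>q. \<Sum>h<n. Acoef \<alpha> A j $$ (i,h) * (Gmat \<alpha> A (q-j) * B) $$ (h,t))"
    using mult_entry[OF G assms(3) _ assms(5)] by simp
  finally show ?thesis .
qed

lemma gb_0:
  assumes "A \<in> carrier_mat n n" "B \<in> carrier_mat n p" "i < n" "t < p"
  shows "(Gmat \<alpha> A 0 * B) $$ (i,t) = B $$ (i,t)"
  using assms by (simp add: Gmat_0)

lemma tri_swap: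
  fixes f :: "nat \<Rightarrow> nat \<Rightarrow> real"
  shows "(\<Sum>j\<le>k. \<Sum>s<k-j. f j s) = (\<Sum>s<k. \<Sum>j\<le>k-1-s. f j s)"
proof -
  have "(\<Sum>j\<le>k. \<Sum>s<k-j. f j s) = (\<Sum>j\<le>k. \<Sum>s\<in>{s\<in>{..<k}. j+s<k}. f j s)"
    by (rule sum.cong[OF refl], rule sum.cong) auto
  also have "\<dots> = (\<Sum>s<k. \<Sum>j\<in>{j\<in>{..k}. j+s<k}. f j s)"
    by (rule sum.swap_restrict) auto
  also have "\<dots> = (\<Sum>s<k. \<Sum>j\<le>k-1-s. f j s)"
    by (rule sum.cong[OF refl], rule sum.cong) auto
  finally show ?thesis .
qed

lemma swap3:
  fixes f :: "'b \<Rightarrow> 'c \<Rightarrow> 'd \<Rightarrow> real"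
  shows "(\<Sum>h\<in>H. a h * (\<Sum>s\<in>S. \<Sum>t\<in>T s. f h s t)) = (\<Sum>s\<in>S. \<Sum>t\<in>T s. \<Sum>h\<in>H. a h * f h s t)"
proof -
  have "(\<Sum>h\<in>H. a h * (\<Sum>s\<in>S. \<Sum>t\<in>T s. f h s t)) = (\<Sum>h\<in>H. \<Sum>s\<in>S. \<Sum>t\<in>T s. a h * f h s t)"
    by (simp add: sum_distrib_left)
  also have "\<dots> = (\<Sum>s\<in>S. \<Sum>h\<in>H. \<Sum>t\<in>T s. a h * f h s t)" by (rule sum.swap)
  also have "\<dots> = (\<Sum>s\<in>S. \<Sum>t\<in>T s. \<Sum>h\<in>H. a h * f h s t)" by (rule sum.cong[OF refl], rule sum.swap)
  finally show ?thesis .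
qed

lemma delta_sum:
  fixes y :: "nat \<Rightarrow> real"
  assumes "i < n"
  shows "(\<Sum>h<n. (if i = h then c else 0) * y h) = c * y i"
proof -
  have "(\<Sum>h<n. (if i = h then c else 0) * y h) = (\<Sum>h<n. if h = i then c * y h else 0)"
    by (rule sum.cong) auto
  also have "\<dots> = c * y i" using assms by (simp add: sum.delta')
  finally show ?thesis .
qed

definition xcf :: "real vec \<Rightarrow> real mat \<Rightarrow> real mat \<Rightarrow> real vec \<Rightarrow> (nat \<Rightarrow> real vec) \<Rightarrow> nat \<Rightarrow> nat \<Rightarrow> real" where
  "xcf \<alpha> A B x0 u k i = (\<Sum>l<dim_row A. Gmat \<alpha> A k $$ (i,l) * x0 $ l)
     + (\<Sum>s<k. \<Sum>t<dim_col B. (Gmat \<alpha> A (k-1-s) * B) $$ (i,t) * u s $ t)"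

lemma xcf_rec:
  assumes "\<alpha> \<in> carrier_vec n" "A \<in> carrier_mat n n" "B \<in> carrier_mat n p" "i < n"
  shows "xcf \<alpha> A B x0 u (Suc k) i = (\<Sum>j\<le>k. \<Sum>h<n. Acoef \<alpha> A j $$ (i,h) * xcf \<alpha> A B x0 u (k-j) h)
      + (\<Sum>t<p. B $$ (i,t) * u k $ t)"
proof -
  let ?a = "\<lambda>j h. Acoef \<alpha> A j $$ (i,h)"
  let ?G = "\<lambda>q h l. Gmat \<alpha> A q $$ (h,l)"
  let ?GB = "\<lambda>q h t. (Gmat \<alpha> A q * B) $$ (h,t)"
  have dA: "dim_row A = n" and dB: "dim_col B = p" using assms by auto
  have X: "(\<Sum>j\<le>k. \<Sum>h<n. ?a j h * (\<Sum>l<n. ?G (k-j) h l * x0 $ l)) = (\<Sum>l<n. ?G (Suc k) i l * x0 $ l)"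
  proof -
    have "(\<Sum>j\<le>k. \<Sum>h<n. ?a j h * (\<Sum>l<n. ?G (k-j) h l * x0 $ l)) = (\<Sum>j\<le>k. \<Sum>h<n. \<Sum>l<n. ?a j h * ?G (k-j) h l * x0 $ l)"
      by (simp add: sum_distrib_left mult.assoc)
    also have "\<dots> = (\<Sum>j\<le>k. \<Sum>l<n. \<Sum>h<n. ?a j h * ?G (k-j) h l * x0 $ l)"
      by (rule sum.cong[OF refl], rule sum.swap)
    also have "\<dots> = (\<Sum>l<n. \<Sum>j\<le>k. \<Sum>h<n. ?a j h * ?G (k-j) h l * x0 $ l)"
      by (rule sum.swap)
    also have "\<dots> = (\<Sum>l<n. ?G (Suc k) i l * x0 $ l)"
      by (rule sum.cong[OF refl]) (simp add: g_rec[OF assms(1,2,4)] sum_distrib_right)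
    finally show ?thesis .
  qed
  have U: "(\<Sum>j\<le>k. \<Sum>h<n. ?a j h * (\<Sum>s<k-j. \<Sum>t<p. ?GB (k-j-1-s) h t * u s $ t))
     = (\<Sum>s<k. \<Sum>t<p. ?GB (k-s) i t * u s $ t)"
  proof -
    have "(\<Sum>j\<le>k. \<Sum>h<n. ?a j h * (\<Sum>s<k-j. \<Sum>t<p. ?GB (k-j-1-s) h t * u s $ t))
      = (\<Sum>j\<le>k. \<Sum>s<k-j. \<Sum>t<p. \<Sum>h<n. ?a j h * (?GB (k-j-1-s) h t * u s $ t))"
      by (rule sum.cong[OF refl], rule swap3)
    also have "\<dots> = (\<Sum>j\<le>k. \<Sum>s<k-j. \<Sum>t<p. (\<Sum>h<n. ?a j h * ?GB (k-j-1-s) h t) * u s $ t)"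
      by (simp add: sum_distrib_right mult.assoc)
    also have "\<dots> = (\<Sum>s<k. \<Sum>j\<le>k-1-s. \<Sum>t<p. (\<Sum>h<n. ?a j h * ?GB (k-j-1-s) h t) * u s $ t)"
      by (rule tri_swap)
    also have "\<dots> = (\<Sum>s<k. \<Sum>t<p. ?GB (k-s) i t * u s $ t)"
    proof (rule sum.cong[OF refl])
      fix s assume "s \<in> {..<k}"
      hence sk: "s < k" by simp
      have "(\<Sum>j\<le>k-1-s. \<Sum>t<p. (\<Sum>h<n. ?a j h * ?GB (k-j-1-s) h t) * u s $ t)
          = (\<Sum>j\<le>k-1-s. \<Sum>t<p. (\<Sum>h<n. ?a j h * ?GB (k-1-s-j) h t) * u s $ t)"
        by (rule sum.cong[OF refl], rule sum.cong[OF refl]) (simp add: algebra_simps)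
      also have "\<dots> = (\<Sum>t<p. \<Sum>j\<le>k-1-s. (\<Sum>h<n. ?a j h * ?GB (k-1-s-j) h t) * u s $ t)"
        by (rule sum.swap)
      also have "\<dots> = (\<Sum>t<p. ?GB (Suc (k-1-s)) i t * u s $ t)"
        by (rule sum.cong[OF refl]) (simp add: gb_rec[OF assms(1,2,3,4)] sum_distrib_right)
      also have "\<dots> = (\<Sum>t<p. ?GB (k-s) i t * u s $ t)"
        using sk by (simp add: Suc_diff_Suc)
      finally show "(\<Sum>j\<le>k-1-s. \<Sum>t<p. (\<Sum>h<n. ?a j h * ?GB (k-j-1-s) h t) * u s $ t)
          = (\<Sum>t<p. ?GB (k-s) i t * u s $ t)" .
    qed
    finally show ?thesis .
  qed
  have last: "(\<Sum>t<p. B $$ (i,t) * u k $ t) = (\<Sum>t<p. ?GB 0 i t * u k $ t)"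
    by (rule sum.cong[OF refl]) (simp add: gb_0[OF assms(2,3,4)])
  have "xcf \<alpha> A B x0 u (Suc k) i = (\<Sum>l<n. ?G (Suc k) i l * x0 $ l) + (\<Sum>s<Suc k. \<Sum>t<p. ?GB (k-s) i t * u s $ t)"
    by (simp add: xcf_def dA dB)
  also have "\<dots> = (\<Sum>l<n. ?G (Suc k) i l * x0 $ l) + (\<Sum>s<k. \<Sum>t<p. ?GB (k-s) i t * u s $ t) + (\<Sum>t<p. B $$ (i,t) * u k $ t)"
    using last by simp
  also have "\<dots> = (\<Sum>j\<le>k. \<Sum>h<n. ?a j h * (\<Sum>l<n. ?G (k-j) h l * x0 $ l))
     + (\<Sum>j\<le>k. \<Sum>h<n. ?a j h * (\<Sum>s<k-j. \<Sum>t<p. ?GB (k-j-1-s) h t * u s $ t)) + (\<Sum>t<p. B $$ (i,t) * u k $ t)"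
    using X U by simp
  also have "\<dots> = (\<Sum>j\<le>k. \<Sum>h<n. ?a j h * xcf \<alpha> A B x0 u (k-j) h) + (\<Sum>t<p. B $$ (i,t) * u k $ t)"
    by (simp add: xcf_def dA dB distrib_left sum.distrib)
  finally show ?thesis .
qed

lemma psi_0[simp]: "psi a 0 = 1" by (simp add: psi_def)

lemma Acoef_sum:
  fixes y :: "nat \<Rightarrow> nat \<Rightarrow> real"
  assumes "\<alpha> \<in> carrier_vec n" "A \<in> carrier_mat n n" "i < n"
  shows "(\<Sum>j\<le>k. \<Sum>h<n. Acoef \<alpha> A j $$ (i,h) * y (k-j) h)
     = (\<Sum>h<n. A $$ (i,h) * y k h) - (\<Sum>j\<le>k. psi (\<alpha> $ i) (Suc j) * y (k-j) i)"
proof -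
  have "\<And>j. (\<Sum>h<n. Acoef \<alpha> A j $$ (i,h) * y (k-j) h)
     = (if j = 0 then (\<Sum>h<n. A $$ (i,h) * y (k-j) h) else 0) - psi (\<alpha> $ i) (Suc j) * y (k-j) i"
  proof -
    fix j
    have "(\<Sum>h<n. Acoef \<alpha> A j $$ (i,h) * y (k-j) h) = (\<Sum>h<n. ((if j = 0 then A $$ (i,h) else 0) - (if i = h then psi (\<alpha> $ i) (Suc j) else 0)) * y (k-j) h)"
      by (rule sum.cong[OF refl]) (simp add: Acoef_entry[OF assms(1,2,3)])
    also have "\<dots> = (\<Sum>h<n. (if j = 0 then A $$ (i,h) else 0) * y (k-j) h) - (\<Sum>h<n. (if i = h then psi (\<alpha> $ i) (Suc j) else 0) * y (k-j) h)"
      by (simp add: left_diff_distrib sum_subtractf)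
    also have "\<dots> = (if j = 0 then (\<Sum>h<n. A $$ (i,h) * y (k-j) h) else 0) - psi (\<alpha> $ i) (Suc j) * y (k-j) i"
      using delta_sum[OF assms(3)] by simp
    finally show "(\<Sum>h<n. Acoef \<alpha> A j $$ (i,h) * y (k-j) h)
     = (if j = 0 then (\<Sum>h<n. A $$ (i,h) * y (k-j) h) else 0) - psi (\<alpha> $ i) (Suc j) * y (k-j) i" .
  qed
  hence "(\<Sum>j\<le>k. \<Sum>h<n. Acoef \<alpha> A j $$ (i,h) * y (k-j) h)
     = (\<Sum>j\<le>k. (if j = 0 then (\<Sum>h<n. A $$ (i,h) * y (k-j) h) else 0)) - (\<Sum>j\<le>k. psi (\<alpha> $ i) (Suc j) * y (k-j) i)"
    by (simp add: sum_subtractf)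
  also have "(\<Sum>j\<le>k. (if j = 0 then (\<Sum>h<n. A $$ (i,h) * y (k-j) h) else 0)) = (\<Sum>h<n. A $$ (i,h) * y k h)"
    by (simp add: sum.delta)
  finally show ?thesis .
qed

lemma sol_step_iff:
  assumes "\<alpha> \<in> carrier_vec n" "A \<in> carrier_mat n n" "B \<in> carrier_mat n p"
    and x: "\<And>k. x k \<in> carrier_vec n" and u: "u k \<in> carrier_vec p"
  shows "frac_diff \<alpha> x (Suc k) = A *\<^sub>v x k + B *\<^sub>v u k \<longleftrightarrow>
    (\<forall>i<n. x (Suc k) $ i = (\<Sum>j\<le>k. \<Sum>h<n. Acoef \<alpha> A j $$ (i,h) * x (k-j) $ h) + (\<Sum>t<p. B $$ (i,t) * u k $ t))"
proof -
  have key: "frac_diff \<alpha> x (Suc k) $ i - (A *\<^sub>v x k + B *\<^sub>v u k) $ i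
     = x (Suc k) $ i - ((\<Sum>j\<le>k. \<Sum>h<n. Acoef \<alpha> A j $$ (i,h) * x (k-j) $ h) + (\<Sum>t<p. B $$ (i,t) * u k $ t))"
    if i: "i < n" for i
  proof -
    have "frac_diff \<alpha> x (Suc k) $ i = (\<Sum>j\<le>Suc k. psi (\<alpha> $ i) j * x (Suc k - j) $ i)"
      using assms(1) i by (simp add: frac_diff_def)
    also have "\<dots> = x (Suc k) $ i + (\<Sum>j\<le>k. psi (\<alpha> $ i) (Suc j) * x (k - j) $ i)"
      by (subst sum.atMost_Suc_shift) simp
    finally have f: "frac_diff \<alpha> x (Suc k) $ i = x (Suc k) $ i + (\<Sum>j\<le>k. psi (\<alpha> $ i) (Suc j) * x (k - j) $ i)" .
    have g: "(A *\<^sub>v x k + B *\<^sub>v u k) $ i = (\<Sum>h<n. A $$ (i,h) * x k $ h) + (\<Sum>t<p. B $$ (i,t) * u k $ t)"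
      using mult_vec_entry[OF assms(2) x i] mult_vec_entry[OF assms(3) u i] assms i x u by simp
    show ?thesis using f g Acoef_sum[OF assms(1,2) i, where k=k and y="\<lambda>q h. x q $ h"] by simp
  qed
  have d1: "frac_diff \<alpha> x (Suc k) \<in> carrier_vec n" using assms(1) by (simp add: frac_diff_def)
  have d2: "A *\<^sub>v x k + B *\<^sub>v u k \<in> carrier_vec n" using assms x u by simp
  show ?thesis
  proof
    assume "frac_diff \<alpha> x (Suc k) = A *\<^sub>v x k + B *\<^sub>v u k"
    thus "\<forall>i<n. x (Suc k) $ i = (\<Sum>j\<le>k. \<Sum>h<n. Acoef \<alpha> A j $$ (i,h) * x (k-j) $ h) + (\<Sum>t<p. B $$ (i,t) * u k $ t)"
      using key by force
  next
    assume R: "\<forall>i<n. x (Suc k) $ i = (\<Sum>j\<le>k. \<Sum>h<n. Acoef \<alpha> A j $$ (i,h) * x (k-j) $ h) + (\<Sum>t<p. B $$ (i,t) * u k $ t)"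
    show "frac_diff \<alpha> x (Suc k) = A *\<^sub>v x k + B *\<^sub>v u k"
    proof (rule eq_vecI)
      show "dim_vec (frac_diff \<alpha> x (Suc k)) = dim_vec (A *\<^sub>v x k + B *\<^sub>v u k)" using d1 d2 assms by simp
      fix i assume "i < dim_vec (A *\<^sub>v x k + B *\<^sub>v u k)"
      hence i: "i < n" using d2 assms by simp
      show "frac_diff \<alpha> x (Suc k) $ i = (A *\<^sub>v x k + B *\<^sub>v u k) $ i" using key[OF i] R i by simp
    qed
  qed
qed

lemma closed_form:
  fixes y :: "nat \<Rightarrow> nat \<Rightarrow> real"
  assumes "\<alpha> \<in> carrier_vec n" "A \<in> carrier_mat n n" "B \<in> carrier_mat n p"
    and rec: "\<And>k i. i < n \<Longrightarrow> y (Suc k) i = (\<Sum>j\<le>k. \<Sum>h<n. Acoef \<alpha> A j $$ (i,h) * y (k-j) h) + (\<Sum>t<p. B $$ (i,t) * u k $ t)"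
    and init: "\<And>i. i < n \<Longrightarrow> y 0 i = x0 $ i"
  shows "\<forall>i<n. y k i = xcf \<alpha> A B x0 u k i"
proof (induction k rule: less_induct)
  case (less k)
  show ?case
  proof (cases k)
    case 0
    have "xcf \<alpha> A B x0 u 0 i = x0 $ i" if "i < n" for i
    proof -
      have "xcf \<alpha> A B x0 u 0 i = (\<Sum>l<n. (if i = l then 1 else 0) * x0 $ l)"
        using assms(2) that by (simp add: xcf_def Gmat_0)
      also have "\<dots> = x0 $ i" using delta_sum[OF that, of 1 "\<lambda>l. x0 $ l"] by simp
      finally show ?thesis .
    qed
    thus ?thesis using 0 init by simp
  next
    case (Suc q)
    show ?thesis
    proof (intro allI impI)
      fix i assume i: "i < n"
      have "y (Suc q) i = (\<Sum>j\<le>q. \<Sum>h<n. Acoef \<alpha> A j $$ (i,h) * xcf \<alpha> A B x0 u (q-j) h) + (\<Sum>t<p. B $$ (i,t) * u q $ t)"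
        unfolding rec[OF i] using less Suc by (intro arg_cong2[where f="(+)"] sum.cong refl) auto
      also have "\<dots> = xcf \<alpha> A B x0 u (Suc q) i" using xcf_rec[OF assms(1,2,3) i] by simp
      finally show "y k i = xcf \<alpha> A B x0 u k i" using Suc by simp
    qed
  qed
qed



lemma (in vec_space) rank_le_card_cols:
  assumes "A \<in> carrier_mat n nc"
  shows "rank A \<le> card (set (cols A))"
proof -
  obtain S where S: "maximal S (\<lambda>T. T \<subseteq> set (cols A) \<and> lin_indpt T)"
    using maximal_exists[of "(\<lambda>T. T \<subseteq> set (cols A) \<and> lin_indpt T)" "card (set (cols A))" "{}"]
    by (meson List.finite_set card_mono empty_iff empty_subsetI finite_lin_indpt2 rev_finite_subset)
  then have "card S \<le> card (set (cols A))" by (simp add: card_mono maximal_def)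
  then show ?thesis using rank_card_indpt[OF assms S] by simp
qed

lemma (in vec_space) rank_iff_inj:
  assumes A: "A \<in> carrier_mat n nc"
  shows "rank A = nc \<longleftrightarrow> (\<forall>v\<in>carrier_vec nc. A *\<^sub>v v = 0\<^sub>v n \<longrightarrow> v = 0\<^sub>v nc)"
proof
  assume r: "rank A = nc"
  show "\<forall>v\<in>carrier_vec nc. A *\<^sub>v v = 0\<^sub>v n \<longrightarrow> v = 0\<^sub>v nc"
  proof (intro ballI impI, rule ccontr)
    fix v assume v: "v \<in> carrier_vec nc" "A *\<^sub>v v = 0\<^sub>v n" "v \<noteq> 0\<^sub>v nc"
    show False
    proof (cases "distinct (cols A)")
      case True
      have "lin_dep (set (cols A))" using lin_depI[OF A v(1) v(3) v(2) True] .
      moreover have "lin_indpt (set (cols A))" using full_rank_lin_indpt[OF A r True] .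
      ultimately show False by simp
    next
      case False
      have "card (set (cols A)) \<noteq> length (cols A)" using False card_distinct by blast
      moreover have "card (set (cols A)) \<le> length (cols A)" by (rule card_length)
      ultimately have "card (set (cols A)) < nc" using A by simp
      thus False using rank_le_card_cols[OF A] r by simp
    qed
  qed
next
  assume inj: "\<forall>v\<in>carrier_vec nc. A *\<^sub>v v = 0\<^sub>v n \<longrightarrow> v = 0\<^sub>v nc"
  have dist: "distinct (cols A)"
  proof (rule ccontr)
    assume "\<not> distinct (cols A)"
    then obtain i j where ij: "i < length (cols A)" "j < length (cols A)" "i \<noteq> j" "cols A ! i = cols A ! j"
      by (auto simp: distinct_conv_nth)
    have i: "i < nc" and j: "j < nc" using ij A by auto
    define w where "w = vec nc (\<lambda>h. (if i = h then 1 else 0) - (if j = h then 1 else 0) :: 'a)"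
    have wc: "w \<in> carrier_vec nc" by (simp add: w_def)
    have "A *\<^sub>v w = 0\<^sub>v n"
    proof (rule eq_vecI)
      show "dim_vec (A *\<^sub>v w) = dim_vec (0\<^sub>v n)" using A by simp
      fix r assume "r < dim_vec (0\<^sub>v n)"
      hence r: "r < n" by simp
      have "(A *\<^sub>v w) $ r = (\<Sum>h<nc. A $$ (r,h) * w $ h)"
        using A wc r by (simp add: scalar_prod_def atLeast0LessThan)
      also have "\<dots> = (\<Sum>h<nc. (if i = h then A $$ (r,h) else 0) - (if j = h then A $$ (r,h) else 0))"
        by (rule sum.cong[OF refl]) (auto simp: w_def)
      also have "\<dots> = A $$ (r,i) - A $$ (r,j)"
        using i j by (simp add: sum_subtractf)
      also have "\<dots> = 0"
      proof -
        have "col A i $ r = col A j $ r" using ij A by (simp add: cols_nth)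
        thus ?thesis using A r i j by simp
      qed
      finally show "(A *\<^sub>v w) $ r = 0\<^sub>v n $ r" using r by simp
    qed
    hence "w = 0\<^sub>v nc" using inj wc by blast
    moreover have "w $ i = 1" using i ij(3) by (simp add: w_def)
    ultimately show False using i by simp
  qed
  have "lin_indpt (set (cols A))"
  proof
    assume "lin_dep (set (cols A))"
    then obtain v where "v \<in> carrier_vec nc" "v \<noteq> 0\<^sub>v nc" "A *\<^sub>v v = 0\<^sub>v n"
      using lin_depE[OF A _ dist] by blast
    thus False using inj by blast
  qed
  thus "rank A = nc" using lin_indpt_full_rank[OF A dist] by simp
qed

lemma (in vec_space) rank_drop_zero_cols:
  assumes A: "A \<in> carrier_mat n (nc + d)"
    and zero: "\<And>i j. i < n \<Longrightarrow> nc \<le> j \<Longrightarrow> j < nc + d \<Longrightarrow> A $$ (i,j) = 0"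
  shows "rank A = rank (mat n nc (\<lambda>(i,j). A $$ (i,j)))"
proof -
  let ?M = "mat n nc (\<lambda>(i,j). A $$ (i,j))"
  have colM: "col ?M j = col A j" if "j < nc" for j
    using that A by (intro eq_vecI) auto
  have s1: "set (cols ?M) \<subseteq> set (cols A)"
  proof
    fix x assume "x \<in> set (cols ?M)"
    then obtain j where j: "j < nc" "x = col ?M j" by (auto simp: in_set_conv_nth)
    thus "x \<in> set (cols A)" using colM A by (auto simp: in_set_conv_nth intro!: exI[of _ j])
  qed
  have s2: "set (cols A) \<subseteq> insert (0\<^sub>v n) (set (cols ?M))"
  proof
    fix x assume "x \<in> set (cols A)"
    then obtain j where j: "j < nc + d" "x = col A j" using A by (auto simp: in_set_conv_nth)
    show "x \<in> insert (0\<^sub>v n) (set (cols ?M))"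
    proof (cases "j < nc")
      case True
      thus ?thesis using j colM by (auto simp: in_set_conv_nth intro!: exI[of _ j])
    next
      case False
      have "x = 0\<^sub>v n" using j False A zero by (intro eq_vecI) auto
      thus ?thesis by simp
    qed
  qed
  have cA: "set (cols A) \<subseteq> carrier_vec n" using A cols_dim by blast
  have cM: "set (cols ?M) \<subseteq> carrier_vec n" using cols_dim by (metis dim_row_mat(1) carrier_matI subset_refl)
  have "span (set (cols A)) = span (set (cols ?M))"
  proof
    show "span (set (cols ?M)) \<subseteq> span (set (cols A))" using s1 by (rule span_is_monotone)
    have sub: "submodule class_ring (span (set (cols ?M))) V" using span_is_submodule[OF cM] .
    have "0\<^sub>v n \<in> span (set (cols ?M))" using submodule.zero_closed[OF sub] by simp
    hence "insert (0\<^sub>v n) (set (cols ?M)) \<subseteq> span (set (cols ?M))" using in_own_span[OF cM] by blast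
    hence "set (cols A) \<subseteq> span (set (cols ?M))" using s2 by blast
    thus "span (set (cols A)) \<subseteq> span (set (cols ?M))" using span_is_subset[OF _ sub] by blast
  qed
  thus ?thesis by (simp add: rank_def)
qed



lemma sum_split_add: fixes a b :: nat and f :: "nat \<Rightarrow> real" shows "(\<Sum>j<a+b. f j) = (\<Sum>j<a. f j) + (\<Sum>j<b. f (a+j) :: real)"
  by (induction b) (auto simp: add.assoc)

lemma sum_split_mult: fixes c p :: nat and f :: "nat \<Rightarrow> real" shows "(\<Sum>j<c*p. f j) = (\<Sum>s<c. \<Sum>t<p. f (s*p+t) :: real)"
proof (induction c)
  case 0 thus ?case by simp
next
  case (Suc c)
  have "Suc c * p = c*p + p" by simp
  hence "(\<Sum>j<Suc c*p. f j) = (\<Sum>j<c*p. f j) + (\<Sum>t<p. f (c*p+t))" unfolding \<open>Suc c * p = c*p + p\<close> using sum_split_add[where a="c*p" and b=p and f=f] by simp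
  thus ?case using Suc by simp
qed

lemma idx_lt: "s < c \<Longrightarrow> t < (p::nat) \<Longrightarrow> s*p + t < c*p"
proof -
  assume a: "s < c" "t < p"
  have "s*p + t < s*p + p" using a by simp
  also have "\<dots> = Suc s * p" by simp
  also have "\<dots> \<le> c * p" using a by (intro mult_le_mono1) simp
  finally show ?thesis .
qed

lemma TXi_entry:
  assumes "C \<in> carrier_mat m n" "B \<in> carrier_mat n p" "i < K*m" "j < n + K*p"
  shows "ThetaXi \<alpha> A B C K $$ (i,j) = (if j < n then (C * Gmat \<alpha> A (i div m)) $$ (i mod m, j)
     else if (j-n) div p < i div m then (C * Gmat \<alpha> A (i div m - (j-n) div p - 1) * B) $$ (i mod m, (j-n) mod p) else 0)"
  using assms by (simp add: ThetaXi_def Theta_def Xi_def Let_def)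

lemma xcf_0:
  assumes "A \<in> carrier_mat n n" "i < n"
  shows "xcf \<alpha> A B x0 u 0 i = x0 $ i"
proof -
  have "xcf \<alpha> A B x0 u 0 i = (\<Sum>l<n. (if i = l then 1 else 0) * x0 $ l)"
    using assms by (simp add: xcf_def Gmat_0)
  also have "\<dots> = x0 $ i" using delta_sum[OF assms(2), of 1 "\<lambda>l. x0 $ l"] by simp
  finally show ?thesis .
qed

lemma xcf_cong:
  assumes "\<And>s. s < k \<Longrightarrow> u s = u' s"
  shows "xcf \<alpha> A B x0 u k i = xcf \<alpha> A B x0 u' k i"
  unfolding xcf_def using assms by (intro arg_cong2[where f="(+)"] refl sum.cong) auto

lemma block:
  assumes A: "A \<in> carrier_mat n n" and B: "B \<in> carrier_mat n p" and C: "C \<in> carrier_mat m n"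
    and al: "\<alpha> \<in> carrier_vec n" and i: "i < K*m"
  shows "(\<Sum>j<n+(K-1)*p. ThetaXi \<alpha> A B C K $$ (i,j) * w $ j)
     = (\<Sum>i'<n. C $$ (i mod m, i') * xcf \<alpha> A B (vec n (\<lambda>l. w $ l))
          (\<lambda>s. vec p (\<lambda>t. if s < K-1 then w $ (n + s*p + t) else 0)) (i div m) i')"
proof -
  define r where "r = i div m"
  define q where "q = i mod m"
  define uw where "uw = (\<lambda>s. vec p (\<lambda>t. if s < K-1 then w $ (n + s*p + t) else 0))"
  let ?T = "ThetaXi \<alpha> A B C K"
  let ?G = "\<lambda>k h l. Gmat \<alpha> A k $$ (h,l)"
  let ?GB = "\<lambda>k h t. (Gmat \<alpha> A k * B) $$ (h,t)"
  have m0: "m > 0" using i by (cases m) auto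
  have r: "r < K" using i r_def by (simp add: less_mult_imp_div_less)
  have q: "q < m" using m0 q_def by simp
  note G = Gmat_carrier[OF al A]
  have dA: "dim_row A = n" "dim_col B = p" using A B by auto
  have X: "(\<Sum>j<n. ?T $$ (i,j) * w $ j) = (\<Sum>i'<n. C $$ (q,i') * (\<Sum>l<n. ?G r i' l * w $ l))"
  proof -
    have "(\<Sum>j<n. ?T $$ (i,j) * w $ j) = (\<Sum>j<n. (\<Sum>i'<n. C $$ (q,i') * ?G r i' j) * w $ j)"
    proof (rule sum.cong[OF refl])
      fix j assume "j \<in> {..<n}"
      hence j: "j < n" by simp
      have "?T $$ (i,j) = (C * Gmat \<alpha> A r) $$ (q, j)"
        using TXi_entry[OF C B i, of j \<alpha> A] j r_def q_def by simp
      also have "\<dots> = (\<Sum>i'<n. C $$ (q,i') * ?G r i' j)" using mult_entry[OF C G q j] .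
      finally show "?T $$ (i,j) * w $ j = (\<Sum>i'<n. C $$ (q,i') * ?G r i' j) * w $ j" by simp
    qed
    also have "\<dots> = (\<Sum>j<n. \<Sum>i'<n. C $$ (q,i') * (?G r i' j * w $ j))"
      by (simp add: sum_distrib_right mult.assoc)
    also have "\<dots> = (\<Sum>i'<n. \<Sum>j<n. C $$ (q,i') * (?G r i' j * w $ j))" by (rule sum.swap)
    also have "\<dots> = (\<Sum>i'<n. C $$ (q,i') * (\<Sum>l<n. ?G r i' l * w $ l))" by (simp add: sum_distrib_left)
    finally show ?thesis .
  qed
  have U: "(\<Sum>j<(K-1)*p. ?T $$ (i,n+j) * w $ (n+j)) = (\<Sum>i'<n. C $$ (q,i') * (\<Sum>s<r. \<Sum>t<p. ?GB (r-1-s) i' t * uw s $ t))"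
  proof -
    have "(\<Sum>j<(K-1)*p. ?T $$ (i,n+j) * w $ (n+j)) = (\<Sum>s<K-1. \<Sum>t<p. ?T $$ (i,n+(s*p+t)) * w $ (n+(s*p+t)))"
      by (rule sum_split_mult)
    also have "\<dots> = (\<Sum>s<K-1. if s < r then (\<Sum>t<p. \<Sum>i'<n. C $$ (q,i') * (?GB (r-1-s) i' t * uw s $ t)) else 0)"
    proof (rule sum.cong[OF refl])
      fix s assume "s \<in> {..<K-1}"
      hence s: "s < K-1" by simp
      show "(\<Sum>t<p. ?T $$ (i,n+(s*p+t)) * w $ (n+(s*p+t))) = (if s < r then (\<Sum>t<p. \<Sum>i'<n. C $$ (q,i') * (?GB (r-1-s) i' t * uw s $ t)) else 0)"
      proof (cases "s < r")
        case True
        show ?thesis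
        proof -
          have "(\<Sum>t<p. ?T $$ (i,n+(s*p+t)) * w $ (n+(s*p+t))) = (\<Sum>t<p. \<Sum>i'<n. C $$ (q,i') * (?GB (r-1-s) i' t * uw s $ t))"
          proof (rule sum.cong[OF refl])
            fix t assume "t \<in> {..<p}"
            hence t: "t < p" by simp
            have lt: "s*p + t < (K-1)*p" using idx_lt[OF s t] .
            have lt2: "n + (s*p+t) < n + K*p" using lt r by (metis add_less_cancel_left diff_le_self less_le_trans mult_le_mono1)
            have dv: "(s*p+t) div p = s" "(s*p+t) mod p = t" using t by auto
            have e1: "r - s - 1 = r - 1 - s" by simp
            have "?T $$ (i,n+(s*p+t)) = (C * Gmat \<alpha> A (r-1-s) * B) $$ (q, t)"
              using TXi_entry[OF C B i lt2, of \<alpha> A] dv True r_def q_def e1 by simp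
            also have "\<dots> = (C * (Gmat \<alpha> A (r-1-s) * B)) $$ (q, t)"
              using assoc_mult_mat[OF C G B] by simp
            also have "\<dots> = (\<Sum>i'<n. C $$ (q,i') * ?GB (r-1-s) i' t)"
              using mult_entry[OF C mult_carrier_mat[OF G B] q t] .
            finally have "?T $$ (i,n+(s*p+t)) = (\<Sum>i'<n. C $$ (q,i') * ?GB (r-1-s) i' t)" .
            moreover have "w $ (n+(s*p+t)) = uw s $ t" using s t by (simp add: uw_def add.assoc)
            ultimately show "?T $$ (i,n+(s*p+t)) * w $ (n+(s*p+t)) = (\<Sum>i'<n. C $$ (q,i') * (?GB (r-1-s) i' t * uw s $ t))"
              by (simp add: sum_distrib_right mult.assoc)
          qed
          thus ?thesis using True by simp
        qed
      next
        case False
        have "?T $$ (i,n+(s*p+t)) = 0" if t: "t < p" for t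
        proof -
          have lt: "s*p + t < (K-1)*p" using idx_lt[OF s t] .
          have lt2: "n + (s*p+t) < n + K*p" using lt r by (metis add_less_cancel_left diff_le_self less_le_trans mult_le_mono1)
          have dv: "(s*p+t) div p = s" using t by auto
          show ?thesis using TXi_entry[OF C B i lt2, of \<alpha> A] dv False r_def by simp
        qed
        thus ?thesis using False by simp
      qed
    qed
    also have "\<dots> = (\<Sum>s\<in>{..<K-1} \<inter> {s. s < r}. \<Sum>t<p. \<Sum>i'<n. C $$ (q,i') * (?GB (r-1-s) i' t * uw s $ t))"
      by (subst sum.inter_restrict) auto
    also have "{..<K-1} \<inter> {s. s < r} = {..<r}" using r by auto
    also have "(\<Sum>s<r. \<Sum>t<p. \<Sum>i'<n. C $$ (q,i') * (?GB (r-1-s) i' t * uw s $ t))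
        = (\<Sum>i'<n. C $$ (q,i') * (\<Sum>s<r. \<Sum>t<p. ?GB (r-1-s) i' t * uw s $ t))"
      by (rule swap3[symmetric])
    finally show ?thesis .
  qed
  have "(\<Sum>j<n+(K-1)*p. ?T $$ (i,j) * w $ j) = (\<Sum>j<n. ?T $$ (i,j) * w $ j) + (\<Sum>j<(K-1)*p. ?T $$ (i,n+j) * w $ (n+j))"
    by (rule sum_split_add)
  also have "\<dots> = (\<Sum>i'<n. C $$ (q,i') * ((\<Sum>l<n. ?G r i' l * w $ l) + (\<Sum>s<r. \<Sum>t<p. ?GB (r-1-s) i' t * uw s $ t)))"
    unfolding X U by (simp add: distrib_left sum.distrib)
  also have "\<dots> = (\<Sum>i'<n. C $$ (q,i') * xcf \<alpha> A B (vec n (\<lambda>l. w $ l)) uw r i')"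
    by (rule sum.cong[OF refl]) (simp add: xcf_def dA)
  finally show ?thesis unfolding r_def q_def uw_def .
qed

lemma xcf_solution:
  assumes al: "\<alpha> \<in> carrier_vec n" and A: "A \<in> carrier_mat n n" and B: "B \<in> carrier_mat n p"
    and u: "\<And>s. u s \<in> carrier_vec p"
  shows "is_solution \<alpha> A B (\<lambda>k. vec n (xcf \<alpha> A B x0 u k)) u"
proof -
  have st: "frac_diff \<alpha> (\<lambda>k. vec n (xcf \<alpha> A B x0 u k)) (Suc k) = A *\<^sub>v vec n (xcf \<alpha> A B x0 u k) + B *\<^sub>v u k" for k
  proof (subst sol_step_iff[where x="\<lambda>k. vec n (xcf \<alpha> A B x0 u k)" and u=u and k=k, OF al A B _ u], simp, intro allI impI)
    fix i assume i: "i < n"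
    have "(\<Sum>j\<le>k. \<Sum>h<n. Acoef \<alpha> A j $$ (i,h) * vec n (xcf \<alpha> A B x0 u (k-j)) $ h)
        = (\<Sum>j\<le>k. \<Sum>h<n. Acoef \<alpha> A j $$ (i,h) * xcf \<alpha> A B x0 u (k-j) h)"
      by (intro sum.cong refl) auto
    thus "vec n (xcf \<alpha> A B x0 u (Suc k)) $ i = (\<Sum>j\<le>k. \<Sum>h<n. Acoef \<alpha> A j $$ (i,h) * vec n (xcf \<alpha> A B x0 u (k-j)) $ h) + (\<Sum>t<p. B $$ (i,t) * u k $ t)"
      using xcf_rec[OF al A B i] i by simp
  qed
  show ?thesis unfolding is_solution_def using st A B u by simp
qed

lemma zero_solution:
  assumes al: "\<alpha> \<in> carrier_vec n" and A: "A \<in> carrier_mat n n" and B: "B \<in> carrier_mat n p"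
  shows "is_solution \<alpha> A B (\<lambda>k. 0\<^sub>v n) (\<lambda>k. 0\<^sub>v p)"
proof -
  have st: "frac_diff \<alpha> (\<lambda>k. 0\<^sub>v n) (Suc k) = A *\<^sub>v 0\<^sub>v n + B *\<^sub>v 0\<^sub>v p" for k
    by (subst sol_step_iff[where x="\<lambda>k. 0\<^sub>v n" and u="\<lambda>k. 0\<^sub>v p" and k=k, OF al A B]) auto
  show ?thesis unfolding is_solution_def using st A B by simp
qed

lemma solution_closed:
  assumes al: "\<alpha> \<in> carrier_vec n" and A: "A \<in> carrier_mat n n" and B: "B \<in> carrier_mat n p"
    and sol: "is_solution \<alpha> A B x u" and i: "i < n"
  shows "x k $ i = xcf \<alpha> A B (x 0) u k i"
proof -
  have xc: "\<And>k. x k \<in> carrier_vec n" and uc: "\<And>k. u k \<in> carrier_vec p"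
    using sol A B by (auto simp: is_solution_def)
  have st: "\<And>k. frac_diff \<alpha> x (Suc k) = A *\<^sub>v x k + B *\<^sub>v u k" using sol by (simp add: is_solution_def)
  have rec: "x (Suc k) $ i = (\<Sum>j\<le>k. \<Sum>h<n. Acoef \<alpha> A j $$ (i,h) * x (k-j) $ h) + (\<Sum>t<p. B $$ (i,t) * u k $ t)"
    if "i < n" for k i
    using sol_step_iff[where x=x and u=u and k=k, OF al A B xc uc] st that by blast
  have "\<forall>i<n. x k $ i = xcf \<alpha> A B (x 0) u k i"
    by (rule closed_form[OF al A B, where y="\<lambda>k i. x k $ i"]) (use rec in auto)
  thus ?thesis using i by simp
qed



theorem proposition2:
  fixes n p m K :: nat and \<alpha> :: "real vec" and A B C :: "real mat"
  assumes "\<alpha> \<in> carrier_vec n"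
    and "A \<in> carrier_mat n n" and "B \<in> carrier_mat n p" and "C \<in> carrier_mat m n"
    and "p < n" and "K \<ge> 1"
  shows "perfectly_observable \<alpha> A B C K \<longleftrightarrow>
         vec_space.rank (K * m) (ThetaXi \<alpha> A B C K) = n + (K - 1) * p"
proof -
  note al = assms(1) and A = assms(2) and B = assms(3) and C = assms(4) and K = assms(6)
  define N where "N = n + (K-1)*p"
  define T where "T = ThetaXi \<alpha> A B C K"
  define M where "M = mat (K*m) N (\<lambda>(i,j). T $$ (i,j))"
  define x0w where "x0w = (\<lambda>w::real vec. vec n (\<lambda>l. w $ l))"
  define uw where "uw = (\<lambda>(w::real vec) s. vec p (\<lambda>t. if s < K-1 then w $ (n + s*p + t) else 0))"
  have NKp: "n + K*p = N + p" using K unfolding N_def by (cases K) auto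
  have Tc: "T \<in> carrier_mat (K*m) (N + p)" using C B NKp by (simp add: T_def ThetaXi_def Theta_def Xi_def Let_def)
  have Tz: "T $$ (i,j) = 0" if "i < K*m" "N \<le> j" "j < N + p" for i j
  proof -
    have p0: "p > 0" using that by simp
    have r: "i div m < K" using that(1) by (simp add: less_mult_imp_div_less)
    have "(K-1)*p \<le> j - n" using that(2) N_def by simp
    hence "(K-1)*p div p \<le> (j-n) div p" by (rule div_le_mono)
    hence "K-1 \<le> (j-n) div p" using p0 by simp
    hence "\<not> (j-n) div p < i div m" using r by simp
    moreover have "\<not> j < n" using that N_def by simp
    moreover have "j < n + K*p" using that NKp by simp
    ultimately show ?thesis using TXi_entry[OF C B that(1), of j \<alpha> A] unfolding T_def by simp
  qed
  have rank_eq: "vec_space.rank (K*m) T = vec_space.rank (K*m) M"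
    unfolding M_def by (rule vec_space.rank_drop_zero_cols[OF Tc Tz])
  have Mc: "M \<in> carrier_mat (K*m) N" by (simp add: M_def)
  have Mv: "(M *\<^sub>v w) $ i = (\<Sum>i'<n. C $$ (i mod m, i') * xcf \<alpha> A B (x0w w) (uw w) (i div m) i')"
    if w: "w \<in> carrier_vec N" and i: "i < K*m" for w i
  proof -
    have "(M *\<^sub>v w) $ i = (\<Sum>j<N. M $$ (i,j) * w $ j)" using mult_vec_entry[OF Mc w i] .
    also have "\<dots> = (\<Sum>j<n+(K-1)*p. T $$ (i,j) * w $ j)"
      unfolding N_def using i by (intro sum.cong refl) (auto simp: M_def N_def)
    also have "\<dots> = (\<Sum>i'<n. C $$ (i mod m, i') * xcf \<alpha> A B (x0w w) (uw w) (i div m) i')"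
      unfolding T_def x0w_def uw_def using block[OF A B C al i] by simp
    finally show ?thesis .
  qed
  define INJ where "INJ = (\<forall>w\<in>carrier_vec N. M *\<^sub>v w = 0\<^sub>v (K*m) \<longrightarrow> w = 0\<^sub>v N)"
  have rank_iff: "vec_space.rank (K*m) M = N \<longleftrightarrow> INJ" unfolding INJ_def by (rule vec_space.rank_iff_inj[OF Mc])
  have obs_inj: "INJ" if obs: "perfectly_observable \<alpha> A B C K"
    unfolding INJ_def
  proof (intro ballI impI)
    fix w :: "real vec" assume w: "w \<in> carrier_vec N" and Mw: "M *\<^sub>v w = 0\<^sub>v (K*m)"
    define x where "x = (\<lambda>k. vec n (xcf \<alpha> A B (x0w w) (uw w) k))"
    have uc: "\<And>s. uw w s \<in> carrier_vec p" by (simp add: uw_def)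
    have sol: "is_solution \<alpha> A B x (uw w)" unfolding x_def by (rule xcf_solution[OF al A B uc])
    have sol0: "is_solution \<alpha> A B (\<lambda>k. 0\<^sub>v n) (\<lambda>k. 0\<^sub>v p)" by (rule zero_solution[OF al A B])
    have outs: "\<forall>k<K. C *\<^sub>v x k = C *\<^sub>v (0\<^sub>v n)"
    proof (intro allI impI)
      fix k assume k: "k < K"
      show "C *\<^sub>v x k = C *\<^sub>v 0\<^sub>v n"
      proof (rule eq_vecI)
        show "dim_vec (C *\<^sub>v x k) = dim_vec (C *\<^sub>v 0\<^sub>v n)" by simp
        fix q assume "q < dim_vec (C *\<^sub>v 0\<^sub>v n)"
        hence q: "q < m" using C by simp
        have ki: "k*m + q < K*m" using idx_lt[OF k q] .
        have dm: "(k*m+q) div m = k" "(k*m+q) mod m = q" using q by auto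
        have xk: "x k \<in> carrier_vec n" by (simp add: x_def)
        have "(C *\<^sub>v x k) $ q = (\<Sum>i'<n. C $$ (q,i') * x k $ i')" using mult_vec_entry[OF C xk q] .
        also have "\<dots> = (\<Sum>i'<n. C $$ (q,i') * xcf \<alpha> A B (x0w w) (uw w) k i')"
          by (intro sum.cong refl) (simp add: x_def)
        also have "\<dots> = (M *\<^sub>v w) $ (k*m+q)" using Mv[OF w ki] dm by simp
        also have "\<dots> = 0" using Mw ki by simp
        finally show "(C *\<^sub>v x k) $ q = (C *\<^sub>v 0\<^sub>v n) $ q" using C q by simp
      qed
    qed
    have e: "x 0 = 0\<^sub>v n \<and> (\<forall>j. j + 1 < K \<longrightarrow> uw w j = 0\<^sub>v p)"
      using obs[unfolded perfectly_observable_def, rule_format, of x "uw w" "\<lambda>k. 0\<^sub>v n" "\<lambda>k. 0\<^sub>v p"] sol sol0 outs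
      by auto
    show "w = 0\<^sub>v N"
    proof (rule eq_vecI)
      show "dim_vec w = dim_vec (0\<^sub>v N)" using w by simp
      fix l assume "l < dim_vec (0\<^sub>v N)"
      hence l: "l < N" by simp
      show "w $ l = 0\<^sub>v N $ l"
      proof (cases "l < n")
        case True
        have "x 0 $ l = w $ l" using True xcf_0[OF A True] by (simp add: x_def x0w_def)
        thus ?thesis using e True l by simp
      next
        case False
        define j' where "j' = l - n"
        have j': "j' < (K-1)*p" using l False by (simp add: j'_def N_def)
        hence p0: "p > 0" by (cases p) auto
        define s where "s = j' div p"
        define t where "t = j' mod p"
        have s: "s < K-1" using j' by (simp add: s_def less_mult_imp_div_less)
        have t: "t < p" using p0 by (simp add: t_def)
        have "s*p + t = j'" by (simp add: s_def t_def)
        hence lst: "l = n + s*p + t" using False by (simp add: j'_def)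
        have "uw w s $ t = w $ l" using s t lst by (simp add: uw_def)
        moreover have "uw w s = 0\<^sub>v p" using e s by simp
        ultimately show ?thesis using t l by simp
      qed
    qed
  qed
  have inj_obs: "perfectly_observable \<alpha> A B C K" if inj: INJ
  proof -
    define wof where "wof = (\<lambda>(x::nat \<Rightarrow> real vec) (u::nat \<Rightarrow> real vec). vec N (\<lambda>l. if l < n then x 0 $ l else u ((l-n) div p) $ ((l-n) mod p)))"
    have wc: "wof x u \<in> carrier_vec N" for x u by (simp add: wof_def)
    have key: "(M *\<^sub>v wof x u) $ i = (C *\<^sub>v x (i div m)) $ (i mod m)"
      if sol: "is_solution \<alpha> A B x u" and i: "i < K*m" for x u i
    proof -
      have xc: "\<And>k. x k \<in> carrier_vec n" and uc: "\<And>k. u k \<in> carrier_vec p"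
        using sol A B by (auto simp: is_solution_def)
      have m0: "m > 0" using i by (cases m) auto
      have r: "i div m < K" using i by (simp add: less_mult_imp_div_less)
      have q: "i mod m < m" using m0 by simp
      have x0: "x0w (wof x u) = x 0"
      proof (rule eq_vecI)
        show "dim_vec (x0w (wof x u)) = dim_vec (x 0)" using xc[of 0] by (simp add: x0w_def)
        fix l assume "l < dim_vec (x 0)"
        hence l: "l < n" using xc[of 0] by simp
        show "x0w (wof x u) $ l = x 0 $ l" using l by (simp add: x0w_def wof_def N_def)
      qed
      have us: "uw (wof x u) s = u s" if s: "s < K-1" for s
      proof (rule eq_vecI)
        show "dim_vec (uw (wof x u) s) = dim_vec (u s)" using uc[of s] by (simp add: uw_def)
        fix t assume "t < dim_vec (u s)"
        hence t: "t < p" using uc[of s] by simp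
        have lt: "s*p + t < (K-1)*p" using idx_lt[OF s t] .
        have dv: "(s*p+t) div p = s" "(s*p+t) mod p = t" using t by auto
        show "uw (wof x u) s $ t = u s $ t" using s t lt dv by (simp add: uw_def wof_def N_def add.assoc)
      qed
      have "(M *\<^sub>v wof x u) $ i = (\<Sum>i'<n. C $$ (i mod m, i') * xcf \<alpha> A B (x0w (wof x u)) (uw (wof x u)) (i div m) i')"
        using Mv[OF wc i] .
      also have "\<dots> = (\<Sum>i'<n. C $$ (i mod m, i') * x (i div m) $ i')"
      proof (intro sum.cong refl arg_cong2[where f="(*)"])
        fix i' assume "i' \<in> {..<n}"
        hence i': "i' < n" by simp
        have "xcf \<alpha> A B (x0w (wof x u)) (uw (wof x u)) (i div m) i' = xcf \<alpha> A B (x 0) u (i div m) i'"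
          unfolding x0 by (rule xcf_cong) (use us r in auto)
        also have "\<dots> = x (i div m) $ i'" using solution_closed[OF al A B sol i'] by simp
        finally show "xcf \<alpha> A B (x0w (wof x u)) (uw (wof x u)) (i div m) i' = x (i div m) $ i'" .
      qed
      also have "\<dots> = (C *\<^sub>v x (i div m)) $ (i mod m)" using mult_vec_entry[OF C xc q] by simp
      finally show ?thesis .
    qed
    show ?thesis
      unfolding perfectly_observable_def
    proof (intro allI impI)
      fix x u x' u'
      assume H: "is_solution \<alpha> A B x u \<and> is_solution \<alpha> A B x' u' \<and> (\<forall>k<K. C *\<^sub>v x k = C *\<^sub>v x' k)"
      hence sol: "is_solution \<alpha> A B x u" and sol': "is_solution \<alpha> A B x' u'"
        and out: "\<And>k. k < K \<Longrightarrow> C *\<^sub>v x k = C *\<^sub>v x' k" by auto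
      have xc: "\<And>k. x k \<in> carrier_vec n" and uc: "\<And>k. u k \<in> carrier_vec p"
        using sol A B by (auto simp: is_solution_def)
      have xc': "\<And>k. x' k \<in> carrier_vec n" and uc': "\<And>k. u' k \<in> carrier_vec p"
        using sol' A B by (auto simp: is_solution_def)
      have Meq: "M *\<^sub>v wof x u = M *\<^sub>v wof x' u'"
      proof (rule eq_vecI)
        show "dim_vec (M *\<^sub>v wof x u) = dim_vec (M *\<^sub>v wof x' u')" by (simp add: M_def)
        fix i assume "i < dim_vec (M *\<^sub>v wof x' u')"
        hence i: "i < K*m" by (simp add: M_def)
        have r: "i div m < K" using i by (simp add: less_mult_imp_div_less)
        show "(M *\<^sub>v wof x u) $ i = (M *\<^sub>v wof x' u') $ i" using key[OF sol i] key[OF sol' i] out[OF r] by simp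
      qed
      have "M *\<^sub>v (wof x u - wof x' u') = 0\<^sub>v (K*m)"
      proof -
        have "M *\<^sub>v (wof x u - wof x' u') = M *\<^sub>v wof x u - M *\<^sub>v wof x' u'"
          by (rule mult_minus_distrib_mat_vec[OF Mc wc wc])
        also have "\<dots> = 0\<^sub>v (K*m)" unfolding Meq by (rule eq_vecI) (auto simp: M_def)
        finally show ?thesis .
      qed
      hence "wof x u - wof x' u' = 0\<^sub>v N" using inj wc unfolding INJ_def by simp
      hence weq: "wof x u $ l = wof x' u' $ l" if "l < N" for l
      proof -
        have "(wof x u - wof x' u') $ l = 0" using that \<open>wof x u - wof x' u' = 0\<^sub>v N\<close> by simp
        thus ?thesis using that by (simp add: wof_def)
      qed
      have "x 0 = x' 0"
      proof (rule eq_vecI)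
        show "dim_vec (x 0) = dim_vec (x' 0)" using xc[of 0] xc'[of 0] by simp
        fix l assume "l < dim_vec (x' 0)"
        hence l: "l < n" using xc'[of 0] by simp
        show "x 0 $ l = x' 0 $ l" using weq[of l] l by (simp add: wof_def N_def)
      qed
      moreover have "u j = u' j" if j: "j + 1 < K" for j
      proof (rule eq_vecI)
        show "dim_vec (u j) = dim_vec (u' j)" using uc[of j] uc'[of j] by simp
        fix t assume "t < dim_vec (u' j)"
        hence t: "t < p" using uc'[of j] by simp
        have jj: "j < K - 1" using j by simp
        have lt: "j*p + t < (K-1)*p" using idx_lt[OF jj t] .
        have dv: "(j*p+t) div p = j" "(j*p+t) mod p = t" using t by auto
        have "n + (j*p+t) < N" using lt by (simp add: N_def)
        thus "u j $ t = u' j $ t" using weq[of "n + (j*p+t)"] dv by (simp add: wof_def)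
      qed
      ultimately show "x 0 = x' 0 \<and> (\<forall>j. j + 1 < K \<longrightarrow> u j = u' j)" by blast
    qed
  qed
  have "perfectly_observable \<alpha> A B C K \<longleftrightarrow> INJ" using obs_inj inj_obs by blast
  also have "\<dots> \<longleftrightarrow> vec_space.rank (K*m) M = N" using rank_iff by simp
  also have "\<dots> \<longleftrightarrow> vec_space.rank (K*m) T = N" using rank_eq by simp
  finally show ?thesis unfolding T_def N_def .
qed

end
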